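(* Let $G=(V,E,w)$ be a weighted undirected connected graph with $n$ vertices and $m$ edges, and let $\Pi_G=U\Sigma V^T$ be a thin SVD of its edge-vertex incidence matrix with $U\in\mathbb{R}^{n\times(n-1)}$, $\Sigma\in\mathbb{R}^{(n-1)\times(n-1)}$, $V\in\mathbb{R}^{m\times(n-1)}$, and let $Y=V^T$. Then: (1) if $T$ is a spanning tree of $G$, then $\mathrm{St}_T(G)=\|Y_{\mathcal S(T)}^{-1}\|_F^2$; (2) if $\mathcal S\subseteq[m]$ has cardinality $n-1$ and $Y_{\mathcal S}$ has full rank, then $H(\mathcal S)$ is a spanning tree of $G$.
   Context: Let $V=\{1,\dots,n\}$, $E=\{(u_1,v_1),\dots,(u_m,v_m)\}$, with positive weights $w$. The edge-vertex incidence matrix $\Pi_G\in\mathbb{R}^{n\times m}$ has $i$-th column $\sqrt{w(u_i,v_i)}(e_{u_i}-e_{v_i})$, where $e_j$ are standard basis vectors; since $G$ is connected, $\mathrm{rank}(\Pi_G)=n-1$. For a set of edges (e.g. of a spanning tree $T$), $\mathcal S(T)\subseteq[m]$ is the set of indices of its edges; for $\mathcal S\subseteq[m]$, $H(\mathcal S)$ is the subgraph of $G$ on vertex set $V$ with the edges indexed by $\mathcal S$. $Y_{\mathcal S}$ is the submatrix of columns of $Y$ indexed by $\mathcal S$. For a spanning tree $T$ and edge $e\in E$, let $p_T(e)$ be the set of edges on the unique path in $T$ between the endpoints of $e$; the stretch of $e$ is $\mathrm{St}_T(e)=\sum_{e'\in p_T(e)}w(e)/w(e')$, and $\mathrm{St}_T(G)=\sum_{e\in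 E}\mathrm{St}_T(e)$. $\|\cdot\|_F$ is the Frobenius norm. *)

theory Defs
  imports "Jordan_Normal_Form.DL_Rank" "Jordan_Normal_Form.DL_Submatrix"
begin

text \<open>Graph on vertex set {0..<n}; edges indexed by {0..<m}; edge i has endpoints
  ends i = (u_i, v_i) and weight w i.\<close>

definition incidence_mat :: "nat \<Rightarrow> nat \<Rightarrow> (nat \<Rightarrow> nat \<times> nat) \<Rightarrow> (nat \<Rightarrow> real) \<Rightarrow> real mat" where
  "incidence_mat n m ends w = mat n m (\<lambda>(r, i). sqrt (w i) *
      ((if r = fst (ends i) then 1 else 0) - (if r = snd (ends i) then 1 else 0)))"

fun walk :: "(nat \<Rightarrow> nat \<times> nat) \<Rightarrow> nat set \<Rightarrow> nat list \<Rightarrow> nat list \<Rightarrow> bool" where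
  "walk ends S [v] [] = True"
| "walk ends S (u # x # vs) (i # es) =
     (i \<in> S \<and> (ends i = (u, x) \<or> ends i = (x, u)) \<and> walk ends S (x # vs) es)"
| "walk ends S _ _ = False"

definition is_path :: "(nat \<Rightarrow> nat \<times> nat) \<Rightarrow> nat set \<Rightarrow> nat \<Rightarrow> nat \<Rightarrow> nat list \<Rightarrow> nat list \<Rightarrow> bool" where
  "is_path ends S u v vs es \<longleftrightarrow> walk ends S vs es \<and> hd vs = u \<and> last vs = v \<and> distinct vs"

definition is_cycle :: "(nat \<Rightarrow> nat \<times> nat) \<Rightarrow> nat set \<Rightarrow> nat list \<Rightarrow> nat list \<Rightarrow> bool" where
  "is_cycle ends S vs es \<longleftrightarrow> walk ends S vs es \<and> es \<noteq> [] \<and> hd vs = last vs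
      \<and> distinct es \<and> distinct (tl vs)"

definition connected_on :: "nat \<Rightarrow> (nat \<Rightarrow> nat \<times> nat) \<Rightarrow> nat set \<Rightarrow> bool" where
  "connected_on n ends S \<longleftrightarrow> (\<forall>u<n. \<forall>v<n. \<exists>vs es. is_path ends S u v vs es)"

definition acyclic_on :: "(nat \<Rightarrow> nat \<times> nat) \<Rightarrow> nat set \<Rightarrow> bool" where
  "acyclic_on ends S \<longleftrightarrow> \<not> (\<exists>vs es. is_cycle ends S vs es)"

definition is_spanning_tree :: "nat \<Rightarrow> nat \<Rightarrow> (nat \<Rightarrow> nat \<times> nat) \<Rightarrow> nat set \<Rightarrow> bool" where
  "is_spanning_tree n m ends S \<longleftrightarrow> S \<subseteq> {..<m} \<and> connected_on n ends S \<and> acyclic_on ends S"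

definition tree_path :: "(nat \<Rightarrow> nat \<times> nat) \<Rightarrow> nat set \<Rightarrow> nat \<Rightarrow> nat \<Rightarrow> nat set" where
  "tree_path ends S u v = (THE P. \<exists>vs es. is_path ends S u v vs es \<and> P = set es)"

definition stretch_edge :: "(nat \<Rightarrow> nat \<times> nat) \<Rightarrow> (nat \<Rightarrow> real) \<Rightarrow> nat set \<Rightarrow> nat \<Rightarrow> real" where
  "stretch_edge ends w S i = (\<Sum>j\<in>tree_path ends S (fst (ends i)) (snd (ends i)). w i / w j)"

definition stretch :: "nat \<Rightarrow> (nat \<Rightarrow> nat \<times> nat) \<Rightarrow> (nat \<Rightarrow> real) \<Rightarrow> nat set \<Rightarrow> real" where
  "stretch m ends w S = (\<Sum>i<m. stretch_edge ends w S i)"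

definition diagonal_nonneg :: "real mat \<Rightarrow> bool" where
  "diagonal_nonneg D \<longleftrightarrow> (\<forall>i<dim_row D. \<forall>j<dim_col D. i \<noteq> j \<longrightarrow> D $$ (i, j) = 0)
      \<and> (\<forall>i<dim_row D. i < dim_col D \<longrightarrow> D $$ (i, i) \<ge> 0)"

definition thin_svd :: "real mat \<Rightarrow> nat \<Rightarrow> real mat \<Rightarrow> real mat \<Rightarrow> real mat \<Rightarrow> bool" where
  "thin_svd A k U Sig V \<longleftrightarrow>
     U \<in> carrier_mat (dim_row A) k \<and> Sig \<in> carrier_mat k k \<and> V \<in> carrier_mat (dim_col A) k \<and>
     transpose_mat U * U = 1\<^sub>m k \<and> transpose_mat V * V = 1\<^sub>m k \<and> diagonal_nonneg Sig \<and>
     A = U * Sig * transpose_mat V"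

text \<open>Y_S: columns of Y indexed by S (in increasing order).\<close>
definition col_submat :: "real mat \<Rightarrow> nat set \<Rightarrow> real mat" where
  "col_submat Y S = submatrix Y {..<dim_row Y} S"

definition mat_inv :: "real mat \<Rightarrow> real mat" where
  "mat_inv A = (SOME B. inverts_mat A B \<and> inverts_mat B A)"

definition frob_sq :: "real mat \<Rightarrow> real" where
  "frob_sq A = (\<Sum>i<dim_row A. \<Sum>j<dim_col A. (A $$ (i, j))\<^sup>2)"

end

theory Submission
  imports Defs
begin


lemma walk_cons: "walk ends S (u # vs) (i # es) \<longleftrightarrow>
   i \<in> S \<and> vs \<noteq> [] \<and> (ends i = (u, hd vs) \<or> ends i = (hd vs, u)) \<and> walk ends S vs es"
  by (cases vs) auto

lemma walk_Nil_es: "walk ends S vs [] \<longleftrightarrow> (\<exists>v. vs = [v])"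
  apply (cases vs)
   apply simp
  subgoal for a l by (cases l) auto
  done

lemma walk_len: "walk ends S vs es \<Longrightarrow> length vs = Suc (length es)"
  by (induction ends S vs es rule: walk.induct) auto

lemma walk_ne: "walk ends S vs es \<Longrightarrow> vs \<noteq> []"
  using walk_len by fastforce

lemma walk_nth: "walk ends S vs es \<Longrightarrow> t < length es \<Longrightarrow>
   es ! t \<in> S \<and> (ends (es!t) = (vs!t, vs!Suc t) \<or> ends (es!t) = (vs!Suc t, vs!t))"
proof (induction ends S vs es arbitrary: t rule: walk.induct)
  case (2 ends S u x vs i es)
  then show ?case by (cases t) auto
qed auto

lemma walk_set_es: "walk ends S vs es \<Longrightarrow> set es \<subseteq> S"
  by (induction ends S vs es rule: walk.induct) auto

lemma walk_mono: "walk ends S vs es \<Longrightarrow> S \<subseteq> T \<Longrightarrow> walk ends T vs es"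
  by (induction ends S vs es rule: walk.induct) auto

lemma walk_take: "walk ends S vs es \<Longrightarrow> t \<le> length es \<Longrightarrow> walk ends S (take (Suc t) vs) (take t es)"
proof (induction ends S vs es arbitrary: t rule: walk.induct)
  case (2 ends S u x vs i es)
  show ?case
  proof (cases t)
    case 0 then show ?thesis by simp
  next
    case (Suc t')
    with 2 have "walk ends S (take (Suc t') (x # vs)) (take t' es)" by auto
    moreover have "take (Suc t') (x # vs) = x # take t' vs" by simp
    ultimately show ?thesis using 2 Suc by (auto simp: walk_cons)
  qed
qed auto

lemma walk_drop: "walk ends S vs es \<Longrightarrow> t \<le> length es \<Longrightarrow> walk ends S (drop t vs) (drop t es)"
proof (induction ends S vs es arbitrary: t rule: walk.induct)
  case (2 ends S u x vs i es)
  then show ?case by (cases t) auto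
qed auto

lemma walk_vertices:
  assumes "walk ends S vs es" "es \<noteq> []" "\<And>i. i \<in> S \<Longrightarrow> fst (ends i) < n \<and> snd (ends i) < n"
  shows "set vs \<subseteq> {..<n}"
  using assms
proof (induction ends S vs es rule: walk.induct)
  case (2 ends S u x vs i es)
  have "u < n \<and> x < n" using 2 by (metis fst_conv snd_conv walk.simps(2))
  moreover have "set (x # vs) \<subseteq> {..<n}"
  proof (cases es)
    case Nil then show ?thesis using 2 calculation by (auto simp: walk_Nil_es)
  next
    case (Cons a list) then show ?thesis using 2 by auto
  qed
  ultimately show ?case by auto
qed auto

lemma path_distinct_es:
  assumes w: "walk ends S vs es" and d: "distinct vs"
  shows "distinct es"
proof -
  have L: "length vs = Suc (length es)" using walk_len[OF w] .
  show ?thesis unfolding distinct_conv_nth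
  proof (intro allI impI)
    fix a b assume ab: "a < length es" "b < length es" "a \<noteq> b"
    show "es ! a \<noteq> es ! b"
    proof
      assume eq: "es ! a = es ! b"
      have A: "ends (es!a) = (vs!a, vs!Suc a) \<or> ends (es!a) = (vs!Suc a, vs!a)" using walk_nth[OF w ab(1)] by blast
      have B: "ends (es!b) = (vs!b, vs!Suc b) \<or> ends (es!b) = (vs!Suc b, vs!b)" using walk_nth[OF w ab(2)] by blast
      have "vs!a = vs!b \<or> vs!a = vs!Suc b" using A B eq by auto
      moreover have "vs!Suc a = vs!b \<or> vs!Suc a = vs!Suc b" using A B eq by auto
      ultimately show False using d ab L by (auto simp: nth_eq_iff_index_eq)
    qed
  qed
qed




definition inc :: "(nat \<Rightarrow> nat \<times> nat) \<Rightarrow> (nat \<Rightarrow> real) \<Rightarrow> nat \<Rightarrow> nat \<Rightarrow> real" where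
  "inc ends w r i = sqrt (w i) * ((if r = fst (ends i) then 1 else 0) - (if r = snd (ends i) then 1 else 0))"

fun coef :: "(nat \<Rightarrow> nat \<times> nat) \<Rightarrow> (nat \<Rightarrow> real) \<Rightarrow> nat list \<Rightarrow> nat list \<Rightarrow> nat \<Rightarrow> real" where
  "coef ends w (u # x # vs) (i # es) = (\<lambda>j. (if j = i then (if ends i = (u, x) then 1 else -1) / sqrt (w i) else 0)
        + coef ends w (x # vs) es j)"
| "coef ends w _ _ = (\<lambda>j. 0)"

lemma walk_single[simp]: "walk ends S [v] es \<longleftrightarrow> es = []"
  by (cases es) auto

lemma coef_supp: "j \<notin> set es \<Longrightarrow> coef ends w vs es j = 0"
  by (induction ends w vs es rule: coef.induct) auto

lemma coef_distinct:
  assumes "walk ends S vs es" "distinct es" "j \<in> set es" "w j > 0"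
  shows "(coef ends w vs es j)\<^sup>2 = 1 / w j"
  using assms
proof (induction ends w vs es rule: coef.induct)
  case (1 ends w u x vs i es)
  show ?case
  proof (cases "j = i")
    case True
    then have "coef ends w (x # vs) es j = 0" using 1 by (intro coef_supp) auto
    then show ?thesis using True 1(5) by (auto simp: power_divide)
  next
    case False
    then show ?thesis using 1 by auto
  qed
qed auto

lemma coef_nz:
  assumes "walk ends S vs es" "distinct es" "j \<in> set es" "w j > 0"
  shows "coef ends w vs es j \<noteq> 0"
  using coef_distinct[where ends=ends and S=S and vs=vs and es=es and j=j and w=w] assms by auto

lemma coef_tele:
  assumes "walk ends S vs es" "finite J" "set es \<subseteq> J" "\<forall>j\<in>set es. w j > 0"
  shows "(\<Sum>j\<in>J. coef ends w vs es j * inc ends w r j) =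
     (if r = hd vs then 1 else 0) - (if r = last vs then 1 else 0)"
  using assms
proof (induction ends w vs es rule: coef.induct)
  case (1 ends w u x vs i es)
  have w: "w i > 0" using 1 by auto
  have IH: "(\<Sum>j\<in>J. coef ends w (x # vs) es j * inc ends w r j) =
     (if r = x then 1 else 0) - (if r = last (x # vs) then 1 else 0)" using 1 by auto
  have "(\<Sum>j\<in>J. coef ends w (u # x # vs) (i # es) j * inc ends w r j) =
     (\<Sum>j\<in>J. (if j = i then (if ends i = (u, x) then 1 else -1) / sqrt (w i) else 0) * inc ends w r j)
     + (\<Sum>j\<in>J. coef ends w (x # vs) es j * inc ends w r j)"
    by (simp add: distrib_right sum.distrib)
  also have "(\<Sum>j\<in>J. (if j = i then (if ends i = (u, x) then 1 else -1) / sqrt (w i) else 0) * inc ends w r j)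
     = (if ends i = (u, x) then 1 else -1) / sqrt (w i) * inc ends w r i"
  proof -
    have "\<And>j. (if j = i then (if ends i = (u, x) then 1 else -1) / sqrt (w i) else 0) * inc ends w r j
       = (if j = i then (if ends i = (u, x) then 1 else -1) / sqrt (w i) * inc ends w r i else 0)" by auto
    then show ?thesis using 1 by (simp only: sum.delta) simp
  qed
  also have "\<dots> = (if r = u then 1 else 0) - (if r = x then 1 else 0)"
  proof -
    have sw: "sqrt (w i) > 0" using w by simp
    have e: "ends i = (u, x) \<or> ends i = (x, u)" using 1(2) by auto
    show ?thesis
    proof (cases "ends i = (u, x)")
      case True
      then show ?thesis using sw unfolding inc_def by auto
    next
      case False
      then have "ends i = (x, u)" "u \<noteq> x" using e by auto
      then show ?thesis using sw False unfolding inc_def by auto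
    qed
  qed
  finally show ?case using IH by simp
next
  case ("2_2" ends w v)
  then show ?case by simp
qed (auto simp: walk_Nil_es)




lemma pick_lessThan: "i < a \<Longrightarrow> pick {..<a} i = i"
proof (induction i)
  case 0
  then show ?case by (auto intro!: Least_equality)
next
  case (Suc i)
  have h: "pick {..<a} i = i" using Suc.IH Suc.prems by simp
  have "pick {..<a} (Suc i) = (LEAST x. x \<in> {..<a} \<and> x > i)" using h by simp
  also have "\<dots> = Suc i" using Suc.prems by (intro Least_equality) auto
  finally show ?case .
qed

lemma bij_pick: assumes "finite S" shows "bij_betw (pick S) {..<card S} S"
proof (rule bij_betw_imageI)
  show "inj_on (pick S) {..<card S}"
  proof (rule inj_onI)
    fix a b assume a: "a \<in> {..<card S}" and b: "b \<in> {..<card S}" and e: "pick S a = pick S b"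
    show "a = b"
    proof (rule ccontr)
      assume "a \<noteq> b"
      then consider "a < b" | "b < a" by linarith
      then show False
      proof cases
        case 1
        have "pick S a < pick S b" using b 1 by (intro pick_mono) auto
        then show False using e by simp
      next
        case 2
        have "pick S b < pick S a" using a 2 by (intro pick_mono) auto
        then show False using e by simp
      qed
    qed
  qed
  show "pick S ` {..<card S} = S"
  proof
    show "pick S ` {..<card S} \<subseteq> S"
    proof
      fix x assume "x \<in> pick S ` {..<card S}"
      then obtain r where r: "r < card S" "x = pick S r" by auto
      show "x \<in> S" unfolding r(2) by (rule pick_in_set) (use r in simp)
    qed
    show "S \<subseteq> pick S ` {..<card S}"
    proof
      fix j assume j: "j \<in> S"
      have "j \<notin> {a\<in>S. a < j}" by simp
      then have "{a\<in>S. a < j} \<subset> S" using j by blast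
      then have "card {a\<in>S. a < j} < card S" using assms psubset_card_mono by blast
      then have "pick S (card {a\<in>S. a < j}) \<in> pick S ` {..<card S}" by simp
      then show "j \<in> pick S ` {..<card S}" using pick_card_in_set[OF j] by simp
    qed
  qed
qed

lemma idx_less: assumes "finite (S::nat set)" "j \<in> S" shows "card {a\<in>S. a < j} < card S"
proof -
  have "j \<notin> {a\<in>S. a < j}" by simp
  then have "{a\<in>S. a < j} \<subset> S" using assms by blast
  then show ?thesis using assms psubset_card_mono by blast
qed




lemma col_submat_carrier:
  assumes "M \<in> carrier_mat a m" "S \<subseteq> {..<m}"
  shows "col_submat M S \<in> carrier_mat a (card S)"
proof -
  have "{j. j < m \<and> j \<in> S} = S" using assms by auto
  moreover have "{i. i < a \<and> i \<in> {..<a}} = {..<a}" by auto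
  ultimately show ?thesis using assms unfolding col_submat_def by (auto simp: dim_submatrix)
qed

lemma col_submat_index:
  assumes "M \<in> carrier_mat a m" "S \<subseteq> {..<m}" "i < a" "r < card S"
  shows "col_submat M S $$ (i, r) = M $$ (i, pick S r)"
proof -
  have "{j. j < m \<and> j \<in> S} = S" using assms by auto
  moreover have "{i. i < a \<and> i \<in> {..<a}} = {..<a}" by auto
  ultimately show ?thesis using assms pick_lessThan[of i a] unfolding col_submat_def
    by (subst submatrix_index) auto
qed

lemma sum_pick:
  assumes "finite S" shows "(\<Sum>r<card S. g (pick S r)) = (\<Sum>j\<in>S. g j)"
  using sum.reindex_bij_betw[OF bij_pick[OF assms], of g] .

lemma mult_vec_index: "M \<in> carrier_mat a b \<Longrightarrow> x \<in> carrier_vec b \<Longrightarrow> i < a \<Longrightarrow>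
   (M *\<^sub>v x) $ i = (\<Sum>j<b. M $$ (i, j) * x $ j)"
  by (auto simp: mult_mat_vec_def scalar_prod_def lessThan_atLeast0 intro!: sum.cong)

lemma bridge:
  assumes M: "M \<in> carrier_mat a m" and S: "S \<subseteq> {..<m}"
  shows "col_submat M S *\<^sub>v vec (card S) (\<lambda>r. f (pick S r)) = M *\<^sub>v vec m (\<lambda>j. if j \<in> S then f j else 0)"
proof (rule eq_vecI)
  have fS: "finite S" using S finite_subset by blast
  have C: "col_submat M S \<in> carrier_mat a (card S)" using col_submat_carrier[OF M S] .
  show "dim_vec (col_submat M S *\<^sub>v vec (card S) (\<lambda>r. f (pick S r))) =
        dim_vec (M *\<^sub>v vec m (\<lambda>j. if j \<in> S then f j else 0))" using C M by auto
  fix i assume "i < dim_vec (M *\<^sub>v vec m (\<lambda>j. if j \<in> S then f j else 0))"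
  then have i: "i < a" using M by auto
  have "(col_submat M S *\<^sub>v vec (card S) (\<lambda>r. f (pick S r))) $ i
      = (\<Sum>r<card S. M $$ (i, pick S r) * f (pick S r))"
    using C i col_submat_index[OF M S i] by (subst mult_vec_index[OF C]) auto
  also have "\<dots> = (\<Sum>j\<in>S. M $$ (i, j) * f j)" using sum_pick[OF fS, of "\<lambda>j. M $$ (i, j) * f j"] .
  also have "\<dots> = (\<Sum>j<m. M $$ (i, j) * (if j \<in> S then f j else 0))"
  proof -
    have "(\<Sum>j<m. M $$ (i, j) * (if j \<in> S then f j else 0)) = (\<Sum>j\<in>{..<m} \<inter> S. M $$ (i, j) * f j)"
      by (simp add: sum.inter_restrict if_distrib cong: if_cong)
    also have "{..<m} \<inter> S = S" using S by auto
    finally show ?thesis by simp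
  qed
  also have "\<dots> = (M *\<^sub>v vec m (\<lambda>j. if j \<in> S then f j else 0)) $ i"
    using M i by (subst mult_vec_index[OF M]) auto
  finally show "(col_submat M S *\<^sub>v vec (card S) (\<lambda>r. f (pick S r))) $ i =
        (M *\<^sub>v vec m (\<lambda>j. if j \<in> S then f j else 0)) $ i" .
qed

lemma expand_vec:
  assumes "finite S" "z \<in> carrier_vec (card S)"
  shows "vec (card S) (\<lambda>r. z $ card {a\<in>S. a < pick S r}) = z"
  using assms card_pick by (intro eq_vecI) auto




lemma kernel_wide:
  assumes M: "(M :: real mat) \<in> carrier_mat a b" and ab: "a < b"
  shows "\<exists>v \<in> carrier_vec b. v \<noteq> 0\<^sub>v b \<and> M *\<^sub>v v = 0\<^sub>v a"
proof -
  define M' where "M' = mat\<^sub>r b b (\<lambda>i. if i = b - 1 then 0\<^sub>v b else (if i < a then row M i else 0\<^sub>v b))"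
  have M'c: "M' \<in> carrier_mat b b" unfolding M'_def by auto
  have "det M' = 0" unfolding M'_def using ab M by (intro det_row_0) auto
  then obtain v where v: "v \<in> carrier_vec b" "v \<noteq> 0\<^sub>v b" "M' *\<^sub>v v = 0\<^sub>v b"
    using det_0_iff_vec_prod_zero[OF M'c] by auto
  have "M *\<^sub>v v = 0\<^sub>v a"
  proof (rule eq_vecI)
    fix i assume "i < dim_vec (0\<^sub>v a :: real vec)"
    then have i: "i < a" by auto
    have "(M' *\<^sub>v v) $ i = 0" using v(3) i ab by simp
    moreover have "row M' i = row M i" unfolding M'_def using i ab M
      by (subst row_mat_of_row_fun) auto
    moreover have "(M' *\<^sub>v v) $ i = row M' i \<bullet> v" using i ab M'c
      by (auto simp: mult_mat_vec_def)
    ultimately show "(M *\<^sub>v v) $ i = 0\<^sub>v a $ i" using i M by (auto simp: mult_mat_vec_def)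
  qed (use M in auto)
  then show ?thesis using v by auto
qed

lemma det_nz_inj:
  assumes "(A :: real mat) \<in> carrier_mat k k" "det A \<noteq> 0" "z \<in> carrier_vec k" "A *\<^sub>v z = 0\<^sub>v k"
  shows "z = 0\<^sub>v k"
  using det_0_iff_vec_prod_zero[OF assms(1)] assms by auto

lemma det_nz_inverse:
  assumes A: "(A :: real mat) \<in> carrier_mat k k" "det A \<noteq> 0"
  shows "\<exists>B \<in> carrier_mat k k. A * B = 1\<^sub>m k \<and> B * A = 1\<^sub>m k"
  using det_non_zero_imp_unit[OF assms, of undefined] unfolding Units_def ring_mat_def by auto




definition dvec :: "nat \<Rightarrow> nat \<Rightarrow> real vec" where
  "dvec n v = vec n (\<lambda>r. (if r = 0 then 1 else 0) - (if r = Suc v then 1 else 0))"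

lemma mat_vec_zero[simp]: "A \<in> carrier_mat a b \<Longrightarrow> A *\<^sub>v 0\<^sub>v b = (0\<^sub>v a :: 'a::comm_ring_1 vec)"
  by (intro eq_vecI) (auto simp: mult_mat_vec_def)

lemma range_lemma:
  assumes Q: "Q \<in> carrier_mat n (n-1)" and K: "K \<in> carrier_mat (n-1) k"
    and h: "\<forall>v<n-1. \<exists>c\<in>carrier_vec k. Q *\<^sub>v (K *\<^sub>v c) = dvec n v"
  shows "\<exists>C\<in>carrier_mat k (n-1). \<forall>z\<in>carrier_vec (n-1). K *\<^sub>v (C *\<^sub>v z) = 0\<^sub>v (n-1) \<longrightarrow> z = 0\<^sub>v (n-1)"
proof -
  from h have "\<forall>v. \<exists>c. v < n-1 \<longrightarrow> c \<in> carrier_vec k \<and> Q *\<^sub>v (K *\<^sub>v c) = dvec n v" by blast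
  then obtain cf where cf: "\<And>v. v < n-1 \<Longrightarrow> cf v \<in> carrier_vec k \<and> Q *\<^sub>v (K *\<^sub>v cf v) = dvec n v"
    by metis
  define C where "C = mat k (n-1) (\<lambda>(j,v). cf v $ j)"
  have Cc: "C \<in> carrier_mat k (n-1)" unfolding C_def by simp
  have colC: "col C v = cf v" if v: "v < n-1" for v
  proof -
    have cv: "dim_vec (cf v) = k" using cf[OF v] by auto
    show ?thesis unfolding C_def using v cv by (intro eq_vecI) auto
  qed
  define D where "D = Q * (K * C)"
  have Dc: "D \<in> carrier_mat n (n-1)" unfolding D_def using Q K Cc by auto
  have Didx: "\<And>r v. r < n \<Longrightarrow> v < n-1 \<Longrightarrow> D $$ (r, v) = dvec n v $ r"
  proof -
    fix r v assume rv: "r < n" "v < n-1"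
    have "col D v = Q *\<^sub>v col (K * C) v" unfolding D_def using Q K Cc rv by (subst col_mult2) auto
    also have "\<dots> = Q *\<^sub>v (K *\<^sub>v col C v)" using K Cc rv by (subst col_mult2) auto
    also have "\<dots> = dvec n v" using colC cf rv by simp
    finally have "col D v $ r = dvec n v $ r" by simp
    then show "D $$ (r, v) = dvec n v $ r" using Dc rv by simp
  qed
  have "\<forall>z\<in>carrier_vec (n-1). K *\<^sub>v (C *\<^sub>v z) = 0\<^sub>v (n-1) \<longrightarrow> z = 0\<^sub>v (n-1)"
  proof (intro ballI impI)
    fix z :: "real vec" assume z: "z \<in> carrier_vec (n-1)" and kz: "K *\<^sub>v (C *\<^sub>v z) = 0\<^sub>v (n-1)"
    have "D *\<^sub>v z = Q *\<^sub>v (K *\<^sub>v (C *\<^sub>v z))" unfolding D_def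
      using assoc_mult_mat_vec[OF Q mult_carrier_mat[OF K Cc] z] assoc_mult_mat_vec[OF K Cc z] by simp
    also have "\<dots> = 0\<^sub>v n" using kz mat_vec_zero[OF Q] by simp
    finally have Dz: "D *\<^sub>v z = 0\<^sub>v n" .
    show "z = 0\<^sub>v (n-1)"
    proof (rule eq_vecI)
      fix v assume "v < dim_vec (0\<^sub>v (n-1) :: real vec)"
      then have v: "v < n-1" by simp
      have "0 = (D *\<^sub>v z) $ Suc v" using Dz v by simp
      also have "\<dots> = (\<Sum>v'<n-1. D $$ (Suc v, v') * z $ v')" using Dc z v by (subst mult_vec_index) auto
      also have "\<dots> = (\<Sum>v'<n-1. (if v' = v then - z $ v' else 0))"
        using v by (intro sum.cong) (auto simp: Didx dvec_def)
      also have "\<dots> = - z $ v" using v by simp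
      finally show "z $ v = 0\<^sub>v (n-1) $ v" using v by simp
    qed (use z in auto)
  qed
  then show ?thesis using Cc by blast
qed




lemma vec_diff_zero: "(a :: real vec) \<in> carrier_vec k \<Longrightarrow> b \<in> carrier_vec k \<Longrightarrow> a - b = 0\<^sub>v k \<Longrightarrow> a = b"
proof -
  assume a: "a \<in> carrier_vec k" and b: "b \<in> carrier_vec k" and d: "a - b = 0\<^sub>v k"
  show "a = b"
  proof (rule eq_vecI)
    fix i assume "i < dim_vec b"
    then have i: "i < k" using b by simp
    have "(a - b) $ i = 0" using d i by simp
    then show "a $ i = b $ i" using a b i by simp
  qed (use a b in simp)
qed

locale setting =
  fixes n m :: nat and ends :: "nat \<Rightarrow> nat \<times> nat" and w :: "nat \<Rightarrow> real" and U Sig V :: "real mat"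
  assumes n_pos: "n \<ge> 1"
    and ends_in: "\<And>i. i < m \<Longrightarrow> fst (ends i) < n \<and> snd (ends i) < n"
    and no_loops: "\<And>i. i < m \<Longrightarrow> fst (ends i) \<noteq> snd (ends i)"
    and w_pos: "\<And>i. i < m \<Longrightarrow> w i > 0"
    and conn: "connected_on n ends {..<m}"
    and svd: "thin_svd (incidence_mat n m ends w) (n - 1) U Sig V"
begin

abbreviation "P \<equiv> incidence_mat n m ends w"
abbreviation "Y \<equiv> transpose_mat V"

lemma P_carrier: "P \<in> carrier_mat n m" unfolding incidence_mat_def by simp

lemma P_idx: "r < n \<Longrightarrow> j < m \<Longrightarrow> P $$ (r, j) = inc ends w r j"
  unfolding incidence_mat_def inc_def by simp

lemma U_c: "U \<in> carrier_mat n (n-1)" and Sig_c: "Sig \<in> carrier_mat (n-1) (n-1)"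
  and V_c: "V \<in> carrier_mat m (n-1)" and UtU: "transpose_mat U * U = 1\<^sub>m (n-1)"
  and VtV: "transpose_mat V * V = 1\<^sub>m (n-1)" and P_eq: "P = U * Sig * Y"
proof -
  have d: "dim_row P = n" "dim_col P = m" by (simp_all add: incidence_mat_def)
  have t: "U \<in> carrier_mat (dim_row P) (n-1) \<and> Sig \<in> carrier_mat (n-1) (n-1) \<and> V \<in> carrier_mat (dim_col P) (n-1) \<and>
     transpose_mat U * U = 1\<^sub>m (n-1) \<and> transpose_mat V * V = 1\<^sub>m (n-1) \<and> diagonal_nonneg Sig \<and>
     P = U * Sig * transpose_mat V" using svd unfolding thin_svd_def by blast
  then show "U \<in> carrier_mat n (n-1)" "Sig \<in> carrier_mat (n-1) (n-1)"
  "V \<in> carrier_mat m (n-1)" "transpose_mat U * U = 1\<^sub>m (n-1)"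
  "transpose_mat V * V = 1\<^sub>m (n-1)" "P = U * Sig * Y" unfolding d by blast+
qed

lemma Y_c: "Y \<in> carrier_mat (n-1) m" using V_c by auto

lemma YYt: "Y * transpose_mat Y = 1\<^sub>m (n-1)" using VtV by simp

lemma P_vec: "x \<in> carrier_vec m \<Longrightarrow> P *\<^sub>v x = U *\<^sub>v (Sig *\<^sub>v (Y *\<^sub>v x))"
proof -
  assume x: "x \<in> carrier_vec m"
  have US: "U * Sig \<in> carrier_mat n (n-1)" using U_c Sig_c by simp
  have "P *\<^sub>v x = (U * Sig) *\<^sub>v (Y *\<^sub>v x)" unfolding P_eq using assoc_mult_mat_vec[OF US Y_c x] .
  also have "\<dots> = U *\<^sub>v (Sig *\<^sub>v (Y *\<^sub>v x))" using assoc_mult_mat_vec[OF U_c Sig_c] Y_c x by simp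
  finally show ?thesis .
qed

lemma P_vec_idx: "x \<in> carrier_vec m \<Longrightarrow> r < n \<Longrightarrow> (P *\<^sub>v x) $ r = (\<Sum>j<m. inc ends w r j * x $ j)"
  using P_carrier P_idx by (subst mult_vec_index[OF P_carrier]) auto

lemma U_inj: assumes z: "z \<in> carrier_vec (n-1)" and "U *\<^sub>v z = 0\<^sub>v n" shows "z = 0\<^sub>v (n-1)"
proof -
  have "z = (transpose_mat U * U) *\<^sub>v z" using UtU z by simp
  also have "\<dots> = transpose_mat U *\<^sub>v (U *\<^sub>v z)" using U_c z by (subst assoc_mult_mat_vec) auto
  also have "\<dots> = 0\<^sub>v (n-1)" using assms U_c mat_vec_zero[of "transpose_mat U" "n-1" n] by simp
  finally show ?thesis .
qed

lemma walk_coef: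
  assumes wk: "walk ends T vs es" and T: "T \<subseteq> {..<m}"
  shows "P *\<^sub>v vec m (coef ends w vs es) = vec n (\<lambda>r. (if r = hd vs then 1 else 0) - (if r = last vs then 1 else 0))"
proof (rule eq_vecI)
  have es: "set es \<subseteq> {..<m}" using walk_set_es[OF wk] T by auto
  fix r assume "r < dim_vec (vec n (\<lambda>r. (if r = hd vs then 1 else 0) - (if r = last vs then 1 else 0)) :: real vec)"
  then have r: "r < n" by simp
  have "(P *\<^sub>v vec m (coef ends w vs es)) $ r = (\<Sum>j<m. coef ends w vs es j * inc ends w r j)"
    using r by (subst P_vec_idx) (auto simp: mult.commute)
  also have "\<dots> = (if r = hd vs then 1 else 0) - (if r = last vs then 1 else 0)"
    using es w_pos by (intro coef_tele[OF wk]) auto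
  finally show "(P *\<^sub>v vec m (coef ends w vs es)) $ r = vec n (\<lambda>r. (if r = hd vs then 1 else 0) - (if r = last vs then 1 else 0)) $ r"
    using r by simp
qed (use P_carrier in auto)

lemma Sig_det: "det Sig \<noteq> 0"
proof
  assume d0: "det Sig = 0"
  have SY: "Sig * Y \<in> carrier_mat (n-1) m" using Sig_c Y_c by auto
  have "\<forall>v<n-1. \<exists>c\<in>carrier_vec m. U *\<^sub>v ((Sig * Y) *\<^sub>v c) = dvec n v"
  proof (intro allI impI)
    fix v assume v: "v < n-1"
    obtain vs es where p: "is_path ends {..<m} 0 (Suc v) vs es"
    proof -
      have "0 < n" "Suc v < n" using v n_pos by auto
      then show ?thesis using conn that unfolding connected_on_def by blast
    qed
    have wk: "walk ends {..<m} vs es" and h: "hd vs = 0" "last vs = Suc v" using p unfolding is_path_def by auto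
    have "U *\<^sub>v ((Sig * Y) *\<^sub>v vec m (coef ends w vs es)) = P *\<^sub>v vec m (coef ends w vs es)"
      using P_vec Sig_c Y_c by (subst assoc_mult_mat_vec) auto
    also have "\<dots> = dvec n v" unfolding walk_coef[OF wk order_refl] dvec_def h ..
    finally show "\<exists>c\<in>carrier_vec m. U *\<^sub>v ((Sig * Y) *\<^sub>v c) = dvec n v" by auto
  qed
  from range_lemma[OF U_c SY this] obtain C where C: "C \<in> carrier_mat m (n-1)"
    and inj: "\<forall>z\<in>carrier_vec (n-1). (Sig * Y) *\<^sub>v (C *\<^sub>v z) = 0\<^sub>v (n-1) \<longrightarrow> z = 0\<^sub>v (n-1)" by blast
  have YC: "Y * C \<in> carrier_mat (n-1) (n-1)" using Y_c C by auto
  have "det (Sig * (Y * C)) = 0" using det_mult[OF Sig_c YC] d0 by simp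
  then obtain z where z: "z \<in> carrier_vec (n-1)" "z \<noteq> 0\<^sub>v (n-1)" "(Sig * (Y * C)) *\<^sub>v z = 0\<^sub>v (n-1)"
    using det_0_iff_vec_prod_zero[OF mult_carrier_mat[OF Sig_c YC]] by auto
  have Cz: "C *\<^sub>v z \<in> carrier_vec m" using C z by auto
  have "(Sig * Y) *\<^sub>v (C *\<^sub>v z) = Sig *\<^sub>v (Y *\<^sub>v (C *\<^sub>v z))" using assoc_mult_mat_vec[OF Sig_c Y_c Cz] .
  also have "\<dots> = Sig *\<^sub>v ((Y * C) *\<^sub>v z)" using assoc_mult_mat_vec[OF Y_c C z(1)] by simp
  also have "\<dots> = (Sig * (Y * C)) *\<^sub>v z" using assoc_mult_mat_vec[OF Sig_c YC z(1)] by simp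
  finally have "(Sig * Y) *\<^sub>v (C *\<^sub>v z) = (Sig * (Y * C)) *\<^sub>v z" .
  then show False using inj z by auto
qed

lemma Sig_inj: "z \<in> carrier_vec (n-1) \<Longrightarrow> Sig *\<^sub>v z = 0\<^sub>v (n-1) \<Longrightarrow> z = 0\<^sub>v (n-1)"
  by (rule det_nz_inj[OF Sig_c Sig_det])

lemma PY: assumes x: "x \<in> carrier_vec m" and e: "P *\<^sub>v x = 0\<^sub>v n" shows "Y *\<^sub>v x = 0\<^sub>v (n-1)"
proof -
  have Yx: "Y *\<^sub>v x \<in> carrier_vec (n-1)" using Y_c x by simp
  have SYx: "Sig *\<^sub>v (Y *\<^sub>v x) \<in> carrier_vec (n-1)" using Sig_c Yx by simp
  have "U *\<^sub>v (Sig *\<^sub>v (Y *\<^sub>v x)) = 0\<^sub>v n" using e P_vec[OF x] by simp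
  then have "Sig *\<^sub>v (Y *\<^sub>v x) = 0\<^sub>v (n-1)" by (rule U_inj[OF SYx])
  then show ?thesis by (rule Sig_inj[OF Yx])
qed

lemma vec_minus_self: "(a :: real vec) \<in> carrier_vec k \<Longrightarrow> a - a = 0\<^sub>v k"
  by (intro eq_vecI) auto

lemma PY_eq: assumes x: "x \<in> carrier_vec m" and x': "x' \<in> carrier_vec m" and e: "P *\<^sub>v x = P *\<^sub>v x'"
  shows "Y *\<^sub>v x = Y *\<^sub>v x'"
proof -
  have d: "x - x' \<in> carrier_vec m" using x x' by simp
  have Px': "P *\<^sub>v x' \<in> carrier_vec n" using P_carrier x' by simp
  have "P *\<^sub>v (x - x') = P *\<^sub>v x - P *\<^sub>v x'" by (rule mult_minus_distrib_mat_vec[OF P_carrier x x'])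
  also have "\<dots> = 0\<^sub>v n" unfolding e by (rule vec_minus_self[OF Px'])
  finally have "Y *\<^sub>v (x - x') = 0\<^sub>v (n-1)" by (rule PY[OF d])
  then have "Y *\<^sub>v x - Y *\<^sub>v x' = 0\<^sub>v (n-1)" unfolding mult_minus_distrib_mat_vec[OF Y_c x x'] .
  moreover have "Y *\<^sub>v x \<in> carrier_vec (n-1)" "Y *\<^sub>v x' \<in> carrier_vec (n-1)" using Y_c x x' by simp_all
  ultimately show ?thesis using vec_diff_zero by blast
qed

end



lemma delta_sum:
  fixes g :: "nat \<Rightarrow> real"
  assumes "u < n" "v < n"
  shows "(\<Sum>r<n. g r * ((if r = u then 1 else 0) - (if r = v then 1 else 0))) = g u - g v"
proof -
  have "(\<Sum>r<n. g r * ((if r = u then 1 else 0) - (if r = v then 1 else 0)))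
      = (\<Sum>r<n. (if r = u then g r else 0) - (if r = v then g r else 0))"
    by (intro sum.cong) auto
  also have "\<dots> = (\<Sum>r<n. (if r = u then g r else 0)) - (\<Sum>r<n. (if r = v then g r else 0))"
    by (rule sum_subtractf)
  also have "\<dots> = g u - g v" using assms by (simp add: sum.delta)
  finally show ?thesis .
qed

lemma inc_sum:
  fixes g :: "nat \<Rightarrow> real"
  assumes "fst (ends j) < n" "snd (ends j) < n"
  shows "(\<Sum>r<n. g r * inc ends w r j) = sqrt (w j) * (g (fst (ends j)) - g (snd (ends j)))"
proof -
  have "(\<Sum>r<n. g r * inc ends w r j) = (\<Sum>r<n. sqrt (w j) * (g r * ((if r = fst (ends j) then 1 else 0) - (if r = snd (ends j) then 1 else 0))))"
    unfolding inc_def by (intro sum.cong) auto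
  also have "\<dots> = sqrt (w j) * (\<Sum>r<n. g r * ((if r = fst (ends j) then 1 else 0) - (if r = snd (ends j) then 1 else 0)))"
    by (simp add: sum_distrib_left)
  also have "\<dots> = sqrt (w j) * (g (fst (ends j)) - g (snd (ends j)))" using delta_sum[OF assms] by simp
  finally show ?thesis .
qed

context setting begin

lemma comp_conn:
  assumes S: "S \<subseteq> {..<m}" and u: "u < n" and v: "v < n" and z: "z \<in> carrier_vec m"
    and supp: "\<And>j. j < m \<Longrightarrow> j \<notin> S \<Longrightarrow> z $ j = 0"
    and Pz: "P *\<^sub>v z = vec n (\<lambda>r. (if r = u then 1 else 0) - (if r = v then 1 else 0))"
  shows "\<exists>vs es. is_path ends S u v vs es"
proof -
  define C where "C = {a. \<exists>vs es. is_path ends S a v vs es}"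
  have vC: "v \<in> C" unfolding C_def is_path_def by (intro CollectI exI[of _ "[v]"] exI[of _ "[]"]) simp
  have step: "b \<in> C" if j: "j \<in> S" and e: "ends j = (a, b) \<or> ends j = (b, a)" and a: "a \<in> C" for j a b
  proof -
    obtain vs es where p: "is_path ends S a v vs es" using a unfolding C_def by blast
    have wk: "walk ends S vs es" and h: "hd vs = a" "last vs = v" and d: "distinct vs"
      using p unfolding is_path_def by auto
    have L: "length vs = Suc (length es)" using walk_len[OF wk] .
    show ?thesis
    proof (cases "b \<in> set vs")
      case True
      then obtain t where t: "t < length vs" "vs ! t = b" by (auto simp: in_set_conv_nth)
      have "walk ends S (drop t vs) (drop t es)" using walk_drop[OF wk] t L by simp
      moreover have "hd (drop t vs) = b" using t by (simp add: hd_drop_conv_nth)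
      moreover have "last (drop t vs) = v" using t h by simp
      moreover have "distinct (drop t vs)" using d by simp
      ultimately show ?thesis unfolding C_def is_path_def by blast
    next
      case False
      have ne: "vs \<noteq> []" using walk_ne[OF wk] .
      have "walk ends S (b # vs) (j # es)" using wk ne e j h by (auto simp: walk_cons)
      moreover have "distinct (b # vs)" using d False by simp
      moreover have "hd (b # vs) = b" "last (b # vs) = v" using ne h by auto
      ultimately show ?thesis unfolding C_def is_path_def by blast
    qed
  qed
  define g :: "nat \<Rightarrow> real" where "g r = (if r \<in> C then 1 else 0)" for r
  have edge0: "(\<Sum>r<n. g r * inc ends w r j) = 0" if j: "j \<in> S" for j
  proof -
    have jm: "j < m" using j S by auto
    have "fst (ends j) \<in> C \<longleftrightarrow> snd (ends j) \<in> C"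
      using step[OF j, of "fst (ends j)" "snd (ends j)"] step[OF j, of "snd (ends j)" "fst (ends j)"] by auto
    then have "g (fst (ends j)) = g (snd (ends j))" unfolding g_def by simp
    then show ?thesis using inc_sum[of ends j n g w] ends_in[OF jm] by simp
  qed
  have "(\<Sum>r<n. g r * (P *\<^sub>v z) $ r) = g u - g v"
    unfolding Pz using delta_sum[OF u v, of g] by simp
  moreover have "(\<Sum>r<n. g r * (P *\<^sub>v z) $ r) = 0"
  proof -
    have "(\<Sum>r<n. g r * (P *\<^sub>v z) $ r) = (\<Sum>r<n. g r * (\<Sum>j<m. inc ends w r j * z $ j))"
      using P_vec_idx[OF z] by simp
    also have "\<dots> = (\<Sum>r<n. \<Sum>j<m. z $ j * (g r * inc ends w r j))"
      by (simp add: sum_distrib_left mult.commute mult.left_commute)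
    also have "\<dots> = (\<Sum>j<m. \<Sum>r<n. z $ j * (g r * inc ends w r j))" by (rule sum.swap)
    also have "\<dots> = (\<Sum>j<m. z $ j * (\<Sum>r<n. g r * inc ends w r j))" by (simp add: sum_distrib_left)
    also have "\<dots> = 0"
    proof (rule sum.neutral, intro ballI)
      fix j assume "j \<in> {..<m}"
      then show "z $ j * (\<Sum>r<n. g r * inc ends w r j) = 0"
        using supp edge0 by (cases "j \<in> S") auto
    qed
    finally show ?thesis .
  qed
  ultimately have "g u = 1" using vC unfolding g_def by simp
  then show ?thesis unfolding g_def C_def by (auto split: if_splits)
qed

end



context setting begin

lemma forest_inj:
  assumes S: "S \<subseteq> {..<m}" and acyc: "acyclic_on ends S" and x: "x \<in> carrier_vec m"
    and supp: "\<And>j. j < m \<Longrightarrow> j \<notin> S \<Longrightarrow> x $ j = 0" and Px: "P *\<^sub>v x = 0\<^sub>v n"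
  shows "x = 0\<^sub>v m"
proof (rule ccontr)
  assume nz: "x \<noteq> 0\<^sub>v m"
  have "\<exists>j<m. x $ j \<noteq> 0"
  proof (rule ccontr)
    assume "\<not> (\<exists>j<m. x $ j \<noteq> 0)"
    then have "x = 0\<^sub>v m" using x by (intro eq_vecI) auto
    with nz show False by simp
  qed
  then obtain j0 where j0: "j0 < m" "x $ j0 \<noteq> 0" by blast
  define F where "F = {j\<in>S. x $ j \<noteq> 0}"
  have FS: "F \<subseteq> S" unfolding F_def by auto
  have Fm: "\<And>j. j \<in> F \<Longrightarrow> j < m" using FS S by auto
  have j0F: "j0 \<in> F" using j0 supp unfolding F_def by auto
  have vert: "(\<Sum>j<m. inc ends w r j * x $ j) = 0" if r: "r < n" for r
    using P_vec_idx[OF x r] Px r by simp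
  define Pth where "Pth = (\<lambda>(vs, es). walk ends F vs es \<and> distinct vs \<and> es \<noteq> [])"
  have P0: "Pth ([fst (ends j0), snd (ends j0)], [j0])"
    unfolding Pth_def using j0F no_loops[OF j0(1)] by simp
  have bound: "\<forall>y. Pth y \<longrightarrow> length (fst y) < Suc n"
  proof (intro allI impI)
    fix y assume "Pth y"
    then obtain vs es where y: "y = (vs, es)" and wk: "walk ends F vs es" and d: "distinct vs" and ne: "es \<noteq> []"
      unfolding Pth_def by (cases y) auto
    have "set vs \<subseteq> {..<n}" using walk_vertices[OF wk ne, of n] Fm ends_in by blast
    then have "card (set vs) \<le> n" using card_mono[of "{..<n}" "set vs"] by simp
    then show "length (fst y) < Suc n" using y distinct_card[OF d] by simp
  qed
  obtain p where Pp: "Pth p" and mx: "\<forall>y. Pth y \<longrightarrow> length (fst y) \<le> length (fst p)"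
    using ex_has_greatest_nat[OF P0 bound] by blast
  obtain vs es where p: "p = (vs, es)" by (cases p)
  have wk: "walk ends F vs es" and dv: "distinct vs" and ne: "es \<noteq> []"
    using Pp unfolding p Pth_def by auto
  have L: "length vs = Suc (length es)" using walk_len[OF wk] .
  obtain e0 es' where es: "es = e0 # es'" using ne by (cases es) auto
  obtain v0 vs' where vs0: "vs = v0 # vs'" using L by (cases vs) auto
  have vs'ne: "vs' \<noteq> []" using L es vs0 by auto
  define v1 where "v1 = hd vs'"
  have e0: "e0 \<in> F" "ends e0 = (v0, v1) \<or> ends e0 = (v1, v0)" using wk unfolding es vs0 v1_def
    by (auto simp: walk_cons)
  have v01: "v0 \<noteq> v1" using dv vs'ne unfolding vs0 v1_def by (cases vs') auto
  have e0m: "e0 < m" using Fm[OF e0(1)] .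
  have v0n: "v0 < n" using e0(2) ends_in[OF e0m] by auto
  have inc0: "inc ends w v0 e0 \<noteq> 0"
  proof -
    have "sqrt (w e0) > 0" using w_pos[OF e0m] by simp
    then show ?thesis using e0(2) v01 no_loops[OF e0m] unfolding inc_def by auto
  qed
  have xe0: "x $ e0 \<noteq> 0" using e0(1) unfolding F_def by auto
  have "\<exists>j<m. j \<noteq> e0 \<and> inc ends w v0 j * x $ j \<noteq> 0"
  proof (rule ccontr)
    assume "\<not> (\<exists>j<m. j \<noteq> e0 \<and> inc ends w v0 j * x $ j \<noteq> 0)"
    then have z: "\<And>j. j \<in> {..<m} - {e0} \<Longrightarrow> inc ends w v0 j * x $ j = 0" by auto
    have "(\<Sum>j<m. inc ends w v0 j * x $ j) = inc ends w v0 e0 * x $ e0 + (\<Sum>j\<in>{..<m} - {e0}. inc ends w v0 j * x $ j)"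
      using e0m by (subst sum.remove[of _ e0]) auto
    also have "(\<Sum>j\<in>{..<m} - {e0}. inc ends w v0 j * x $ j) = 0" using z by (intro sum.neutral) blast
    finally have "(\<Sum>j<m. inc ends w v0 j * x $ j) = inc ends w v0 e0 * x $ e0" by simp
    then show False using vert[OF v0n] inc0 xe0 by simp
  qed
  then obtain j where j: "j < m" "j \<noteq> e0" "inc ends w v0 j \<noteq> 0" "x $ j \<noteq> 0" by auto
  have jF: "j \<in> F" using j supp unfolding F_def by auto
  have v0j: "v0 = fst (ends j) \<or> v0 = snd (ends j)"
  proof (rule ccontr)
    assume "\<not> ?thesis"
    then have "inc ends w v0 j = 0" unfolding inc_def by auto
    with j show False by simp
  qed
  define y where "y = (if v0 = fst (ends j) then snd (ends j) else fst (ends j))"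
  have ej: "ends j = (v0, y) \<or> ends j = (y, v0)" using v0j unfolding y_def by (cases "ends j") auto
  have yv0: "y \<noteq> v0" using ej no_loops[OF j(1)] by auto
  have hdvs: "hd vs = v0" using vs0 by simp
  show False
  proof (cases "y \<in> set vs")
    case False
    have "walk ends F (y # vs) (j # es)" using wk jF ej hdvs vs0 by (auto simp: walk_cons)
    then have "Pth (y # vs, j # es)" unfolding Pth_def using dv False by simp
    then have "length (y # vs) \<le> length vs" using mx unfolding p by fastforce
    then show False by simp
  next
    case True
    then obtain t where t: "t < length vs" "vs ! t = y" by (auto simp: in_set_conv_nth)
    have t0: "t \<noteq> 0" proof assume "t = 0" then show False using t yv0 vs0 by simp qed
    have tle: "t \<le> length es" using t L by simp
    have wt: "walk ends F (take (Suc t) vs) (take t es)" using walk_take[OF wk tle] .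
    have tne: "take (Suc t) vs \<noteq> []" using vs0 by simp
    have htk: "hd (take (Suc t) vs) = v0" using vs0 by simp
    have ltk: "last (take (Suc t) vs) = y"
      using t by (simp add: take_Suc_conv_app_nth)
    have des: "distinct es" using path_distinct_es[OF wk dv] .
    have jnot: "j \<notin> set (take t es)"
    proof
      assume "j \<in> set (take t es)"
      then have "j \<in> set es" using in_set_takeD by fast
      then obtain s where s: "s < length es" "es ! s = j" by (auto simp: in_set_conv_nth)
      have es_s: "ends j = (vs!s, vs!Suc s) \<or> ends j = (vs!Suc s, vs!s)" using walk_nth[OF wk s(1)] s by simp
      have "v0 = vs ! s \<or> v0 = vs ! Suc s" using es_s ej yv0 by auto
      moreover have "v0 = vs ! 0" using vs0 by simp
      ultimately have "s = 0" using dv s L by (auto simp: nth_eq_iff_index_eq)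
      then have "j = e0" using s es by simp
      with j show False by simp
    qed
    have "walk ends F (y # take (Suc t) vs) (j # take t es)"
      using wt jF ej tne htk by (auto simp: walk_cons)
    moreover have "hd (y # take (Suc t) vs) = last (y # take (Suc t) vs)" using ltk tne by simp
    moreover have "distinct (j # take t es)" using jnot des by simp
    moreover have "distinct (tl (y # take (Suc t) vs))" using dv by simp
    ultimately have "is_cycle ends F (y # take (Suc t) vs) (j # take t es)" unfolding is_cycle_def by simp
    then have "is_cycle ends S (y # take (Suc t) vs) (j # take t es)"
      unfolding is_cycle_def using walk_mono[OF _ FS] by blast
    then show False using acyc unfolding acyclic_on_def by blast
  qed
qed

end



lemma mult_mat_index_sum: "B \<in> carrier_mat a b \<Longrightarrow> Y \<in> carrier_mat b m \<Longrightarrow> i < a \<Longrightarrow> c < m \<Longrightarrow>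
  (B * Y) $$ (i, c) = (\<Sum>p<b. B $$ (i, p) * Y $$ (p, c))"
  by (auto simp: scalar_prod_def lessThan_atLeast0 intro!: sum.cong)

lemma frob_row:
  fixes B Y :: "real mat"
  assumes B: "B \<in> carrier_mat a b" and Y: "Y \<in> carrier_mat b m" and YY: "Y * transpose_mat Y = 1\<^sub>m b"
    and i: "i < a"
  shows "(\<Sum>c<m. ((B * Y) $$ (i, c))\<^sup>2) = (\<Sum>p<b. (B $$ (i, p))\<^sup>2)"
proof -
  have yy: "(\<Sum>c<m. Y $$ (p, c) * Y $$ (q, c)) = (if p = q then 1 else 0)" if "p < b" "q < b" for p q
  proof -
    have Yt: "transpose_mat Y \<in> carrier_mat m b" using Y by simp
    have "(Y * transpose_mat Y) $$ (p, q) = (\<Sum>c<m. Y $$ (p, c) * transpose_mat Y $$ (c, q))"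
      by (rule mult_mat_index_sum[OF Y Yt that])
    also have "\<dots> = (\<Sum>c<m. Y $$ (p, c) * Y $$ (q, c))"
    proof (intro sum.cong refl)
      fix c assume "c \<in> {..<m}"
      then have "transpose_mat Y $$ (c, q) = Y $$ (q, c)" using Y that by simp
      then show "Y $$ (p, c) * transpose_mat Y $$ (c, q) = Y $$ (p, c) * Y $$ (q, c)" by simp
    qed
    finally have "(\<Sum>c<m. Y $$ (p, c) * Y $$ (q, c)) = (Y * transpose_mat Y) $$ (p, q)" by simp
    also have "\<dots> = (if p = q then 1 else 0)" unfolding YY using that by simp
    finally show ?thesis .
  qed
  have "(\<Sum>c<m. ((B * Y) $$ (i, c))\<^sup>2) = (\<Sum>c<m. (\<Sum>p<b. B $$ (i, p) * Y $$ (p, c))\<^sup>2)"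
  proof (intro sum.cong refl)
    fix c assume "c \<in> {..<m}"
    then have "c < m" by simp
    then show "((B * Y) $$ (i, c))\<^sup>2 = (\<Sum>p<b. B $$ (i, p) * Y $$ (p, c))\<^sup>2"
      using mult_mat_index_sum[OF B Y i] by simp
  qed
  also have "\<dots> = (\<Sum>c<m. \<Sum>p<b. \<Sum>q<b. (B $$ (i, p) * B $$ (i, q)) * (Y $$ (p, c) * Y $$ (q, c)))"
  proof (intro sum.cong refl)
    fix c
    show "(\<Sum>p<b. B $$ (i, p) * Y $$ (p, c))\<^sup>2 = (\<Sum>p<b. \<Sum>q<b. (B $$ (i, p) * B $$ (i, q)) * (Y $$ (p, c) * Y $$ (q, c)))"
      unfolding power2_eq_square sum_product by (intro sum.cong refl) (simp only: mult_ac)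
  qed
  also have "\<dots> = (\<Sum>p<b. \<Sum>c<m. \<Sum>q<b. (B $$ (i, p) * B $$ (i, q)) * (Y $$ (p, c) * Y $$ (q, c)))"
    by (rule sum.swap)
  also have "\<dots> = (\<Sum>p<b. \<Sum>q<b. \<Sum>c<m. (B $$ (i, p) * B $$ (i, q)) * (Y $$ (p, c) * Y $$ (q, c)))"
    by (intro sum.cong refl sum.swap)
  also have "\<dots> = (\<Sum>p<b. \<Sum>q<b. (B $$ (i, p) * B $$ (i, q)) * (if p = q then 1 else 0))"
  proof (intro sum.cong refl)
    fix p q assume "p \<in> {..<b}" "q \<in> {..<b}"
    then show "(\<Sum>c<m. (B $$ (i, p) * B $$ (i, q)) * (Y $$ (p, c) * Y $$ (q, c))) = (B $$ (i, p) * B $$ (i, q)) * (if p = q then 1 else 0)"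
      using yy[of p q] by (simp only: sum_distrib_left[symmetric] lessThan_iff)
  qed
  also have "\<dots> = (\<Sum>p<b. (B $$ (i, p))\<^sup>2)"
  proof (intro sum.cong refl)
    fix p assume p: "p \<in> {..<b}"
    have "(\<Sum>q<b. (B $$ (i, p) * B $$ (i, q)) * (if p = q then 1 else 0)) = (\<Sum>q<b. if p = q then B $$ (i, p) * B $$ (i, q) else 0)"
      by (intro sum.cong refl) simp
    also have "\<dots> = B $$ (i, p) * B $$ (i, p)" using p by (simp add: sum.delta)
    finally show "(\<Sum>q<b. (B $$ (i, p) * B $$ (i, q)) * (if p = q then 1 else 0)) = (B $$ (i, p))\<^sup>2"
      by (simp add: power2_eq_square)
  qed
  finally show ?thesis .
qed

lemma frob_mult:
  fixes B Y :: "real mat"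
  assumes B: "B \<in> carrier_mat a b" and Y: "Y \<in> carrier_mat b m" and YY: "Y * transpose_mat Y = 1\<^sub>m b"
  shows "frob_sq (B * Y) = frob_sq B"
proof -
  have d: "dim_row (B * Y) = a" "dim_col (B * Y) = m" "dim_row B = a" "dim_col B = b" using B Y by auto
  show ?thesis unfolding frob_sq_def d
  proof (rule sum.cong[OF refl])
    fix i assume "i \<in> {..<a}"
    then show "(\<Sum>c<m. ((B * Y) $$ (i, c))\<^sup>2) = (\<Sum>p<b. (B $$ (i, p))\<^sup>2)"
      using frob_row[OF B Y YY] by simp
  qed
qed

context setting begin

definition ex :: "nat set \<Rightarrow> real vec \<Rightarrow> real vec" where
  "ex S z = vec m (\<lambda>j. if j \<in> S then z $ card {a\<in>S. a < j} else 0)"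

lemma Y_expand:
  assumes S: "S \<subseteq> {..<m}" and z: "z \<in> carrier_vec (card S)"
  shows "Y *\<^sub>v ex S z = col_submat Y S *\<^sub>v z"
proof -
  have fS: "finite S" using S finite_subset by blast
  show ?thesis
    using bridge[OF Y_c S, of "\<lambda>j. z $ card {a\<in>S. a < j}"] expand_vec[OF fS z] unfolding ex_def by simp
qed

lemma Y_restrict:
  assumes S: "S \<subseteq> {..<m}" and supp: "\<And>j. j < m \<Longrightarrow> j \<notin> S \<Longrightarrow> c j = 0"
  shows "Y *\<^sub>v vec m c = col_submat Y S *\<^sub>v vec (card S) (\<lambda>r. c (pick S r))"
proof -
  have "vec m (\<lambda>j. if j \<in> S then c j else 0) = vec m c" using supp by (intro eq_vecI) auto
  then show ?thesis using bridge[OF Y_c S, of c] by simp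
qed

lemma ex_carrier: "ex S z \<in> carrier_vec m" unfolding ex_def by simp

lemma ex_pick: assumes S: "S \<subseteq> {..<m}" and r: "r < card S" shows "ex S z $ pick S r = z $ r"
proof -
  have p: "pick S r \<in> S" using r by (intro pick_in_set) simp
  then have "pick S r < m" using S by auto
  then show ?thesis unfolding ex_def using p card_pick[of r S] r by simp
qed

lemma A_kernel:
  assumes S: "S \<subseteq> {..<m}" and acyc: "acyclic_on ends S" and z: "z \<in> carrier_vec (card S)"
    and Az: "col_submat Y S *\<^sub>v z = 0\<^sub>v (n-1)"
  shows "z = 0\<^sub>v (card S)"
proof -
  have Yx: "Y *\<^sub>v ex S z = 0\<^sub>v (n-1)" using Y_expand[OF S z] Az by simp
  have "P *\<^sub>v ex S z = U *\<^sub>v (Sig *\<^sub>v 0\<^sub>v (n-1))" using P_vec[OF ex_carrier] Yx by simp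
  also have "\<dots> = 0\<^sub>v n" using mat_vec_zero[OF Sig_c] mat_vec_zero[OF U_c] by simp
  finally have Px: "P *\<^sub>v ex S z = 0\<^sub>v n" .
  have supp: "\<And>j. j < m \<Longrightarrow> j \<notin> S \<Longrightarrow> ex S z $ j = 0" unfolding ex_def by simp
  have x0: "ex S z = 0\<^sub>v m" by (rule forest_inj[OF S acyc ex_carrier supp Px])
  show ?thesis
  proof (rule eq_vecI)
    fix r assume "r < dim_vec (0\<^sub>v (card S) :: real vec)"
    then have r: "r < card S" by simp
    have "pick S r \<in> S" using r by (intro pick_in_set) simp
    then have "pick S r < m" using S by auto
    then have "ex S z $ pick S r = 0" using x0 by simp
    then show "z $ r = 0\<^sub>v (card S) $ r" using ex_pick[OF S r] r by simp
  qed (use z in simp)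
qed

end



context setting begin

lemma coef_vec_supp:
  assumes "walk ends S vs es" "j < m" "j \<notin> S"
  shows "coef ends w vs es j = 0"
  using coef_supp walk_set_es[OF assms(1)] assms(3) by blast

lemma path_range:
  assumes S: "S \<subseteq> {..<m}" and wk: "walk ends S vs es"
  shows "P *\<^sub>v vec m (coef ends w vs es) = (U * Sig) *\<^sub>v (col_submat Y S *\<^sub>v vec (card S) (\<lambda>r. coef ends w vs es (pick S r)))"
proof -
  have A: "col_submat Y S \<in> carrier_mat (n-1) (card S)" using col_submat_carrier[OF Y_c S] .
  have "P *\<^sub>v vec m (coef ends w vs es) = U *\<^sub>v (Sig *\<^sub>v (Y *\<^sub>v vec m (coef ends w vs es)))" by (rule P_vec) simp
  also have "Y *\<^sub>v vec m (coef ends w vs es) = col_submat Y S *\<^sub>v vec (card S) (\<lambda>r. coef ends w vs es (pick S r))"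
    using Y_restrict[OF S] coef_vec_supp[OF wk] by blast
  finally show ?thesis using assoc_mult_mat_vec[OF U_c Sig_c, of "col_submat Y S *\<^sub>v vec (card S) (\<lambda>r. coef ends w vs es (pick S r))"] A
    by simp
qed

lemma tree_card:
  assumes T: "is_spanning_tree n m ends S"
  shows "card S = n - 1"
proof -
  have S: "S \<subseteq> {..<m}" and cS: "connected_on n ends S" and acyc: "acyclic_on ends S"
    using T unfolding is_spanning_tree_def by auto
  let ?A = "col_submat Y S"
  have A: "?A \<in> carrier_mat (n-1) (card S)" using col_submat_carrier[OF Y_c S] .
  have US: "U * Sig \<in> carrier_mat n (n-1)" using U_c Sig_c by simp
  have "\<forall>v<n-1. \<exists>c\<in>carrier_vec (card S). (U * Sig) *\<^sub>v (?A *\<^sub>v c) = dvec n v"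
  proof (intro allI impI)
    fix v assume v: "v < n-1"
    have "0 < n" "Suc v < n" using v n_pos by auto
    then obtain vs es where p: "is_path ends S 0 (Suc v) vs es" using cS unfolding connected_on_def by blast
    have wk: "walk ends S vs es" and h: "hd vs = 0" "last vs = Suc v" using p unfolding is_path_def by auto
    have "(U * Sig) *\<^sub>v (?A *\<^sub>v vec (card S) (\<lambda>r. coef ends w vs es (pick S r))) = P *\<^sub>v vec m (coef ends w vs es)"
      using path_range[OF S wk] by simp
    also have "\<dots> = dvec n v" unfolding walk_coef[OF wk S] dvec_def h ..
    finally show "\<exists>c\<in>carrier_vec (card S). (U * Sig) *\<^sub>v (?A *\<^sub>v c) = dvec n v"
      by (intro bexI[of _ "vec (card S) (\<lambda>r. coef ends w vs es (pick S r))"]) auto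
  qed
  from range_lemma[OF US A this] obtain C where C: "C \<in> carrier_mat (card S) (n-1)"
    and inj: "\<forall>z\<in>carrier_vec (n-1). ?A *\<^sub>v (C *\<^sub>v z) = 0\<^sub>v (n-1) \<longrightarrow> z = 0\<^sub>v (n-1)" by blast
  have ge: "\<not> card S < n - 1"
  proof
    assume lt: "card S < n - 1"
    obtain z where z: "z \<in> carrier_vec (n-1)" "z \<noteq> 0\<^sub>v (n-1)" "C *\<^sub>v z = 0\<^sub>v (card S)"
      using kernel_wide[OF C lt] by blast
    have "?A *\<^sub>v (C *\<^sub>v z) = 0\<^sub>v (n-1)" unfolding z(3) by (rule mat_vec_zero[OF A])
    then show False using inj z by blast
  qed
  have le: "\<not> n - 1 < card S"
  proof
    assume lt: "n - 1 < card S"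
    obtain z where z: "z \<in> carrier_vec (card S)" "z \<noteq> 0\<^sub>v (card S)" "?A *\<^sub>v z = 0\<^sub>v (n-1)"
      using kernel_wide[OF A lt] by blast
    then show False using A_kernel[OF S acyc] by blast
  qed
  from ge le show ?thesis by simp
qed

lemma tree_det:
  assumes T: "is_spanning_tree n m ends S"
  shows "det (col_submat Y S) \<noteq> 0"
proof
  assume d: "det (col_submat Y S) = 0"
  have S: "S \<subseteq> {..<m}" and acyc: "acyclic_on ends S" using T unfolding is_spanning_tree_def by auto
  have A: "col_submat Y S \<in> carrier_mat (card S) (card S)" using col_submat_carrier[OF Y_c S] tree_card[OF T] by simp
  obtain z where z: "z \<in> carrier_vec (card S)" "z \<noteq> 0\<^sub>v (card S)" "col_submat Y S *\<^sub>v z = 0\<^sub>v (card S)"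
    using det_0_iff_vec_prod_zero[OF A] d by blast
  then show False using A_kernel[OF S acyc] tree_card[OF T] by auto
qed

end



lemma mat_inv_props:
  assumes A: "(A :: real mat) \<in> carrier_mat k k" and d: "det A \<noteq> 0"
  shows "mat_inv A \<in> carrier_mat k k \<and> A * mat_inv A = 1\<^sub>m k \<and> mat_inv A * A = 1\<^sub>m k"
proof -
  obtain B where B: "B \<in> carrier_mat k k" "A * B = 1\<^sub>m k" "B * A = 1\<^sub>m k" using det_nz_inverse[OF A d] by blast
  have "inverts_mat A B \<and> inverts_mat B A" unfolding inverts_mat_def using A B by simp
  then have h: "inverts_mat A (mat_inv A) \<and> inverts_mat (mat_inv A) A" unfolding mat_inv_def by (rule someI)
  let ?B = "mat_inv A"
  have 1: "A * ?B = 1\<^sub>m k" using h A unfolding inverts_mat_def by simp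
  have 2: "?B * A = 1\<^sub>m (dim_row ?B)" using h unfolding inverts_mat_def by simp
  have "dim_col (A * ?B) = k" unfolding 1 by simp
  then have c: "dim_col ?B = k" by simp
  have "dim_col (?B * A) = dim_row ?B" unfolding 2 by simp
  then have r: "dim_row ?B = k" using A by simp
  show ?thesis using 1 2 c r by auto
qed

context setting begin

lemma path_unique_edges:
  assumes T: "is_spanning_tree n m ends S"
    and p: "is_path ends S a b vs es" and p': "is_path ends S a b vs' es'"
  shows "set es = set es'"
proof -
  have S: "S \<subseteq> {..<m}" and acyc: "acyclic_on ends S" using T unfolding is_spanning_tree_def by auto
  have wk: "walk ends S vs es" and h: "hd vs = a" "last vs = b" and d: "distinct vs" using p unfolding is_path_def by auto
  have wk': "walk ends S vs' es'" and h': "hd vs' = a" "last vs' = b" and d': "distinct vs'" using p' unfolding is_path_def by auto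
  have esm: "set es \<subseteq> {..<m}" "set es' \<subseteq> {..<m}" using walk_set_es[OF wk] walk_set_es[OF wk'] S by auto
  let ?c = "coef ends w vs es" and ?c' = "coef ends w vs' es'"
  define x where "x = vec m (\<lambda>j. ?c j - ?c' j)"
  have xc: "x \<in> carrier_vec m" unfolding x_def by simp
  have supp: "\<And>j. j < m \<Longrightarrow> j \<notin> S \<Longrightarrow> x $ j = 0"
    unfolding x_def using coef_vec_supp[OF wk] coef_vec_supp[OF wk'] by simp
  have Px: "P *\<^sub>v x = 0\<^sub>v n"
  proof (rule eq_vecI)
    fix r assume "r < dim_vec (0\<^sub>v n :: real vec)"
    then have r: "r < n" by simp
    have "(P *\<^sub>v x) $ r = (\<Sum>j<m. inc ends w r j * x $ j)" by (rule P_vec_idx[OF xc r])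
    also have "\<dots> = (\<Sum>j<m. inc ends w r j * (?c j - ?c' j))" unfolding x_def
      by (intro sum.cong refl) simp
    also have "\<dots> = (\<Sum>j<m. ?c j * inc ends w r j) - (\<Sum>j<m. ?c' j * inc ends w r j)"
      by (simp add: sum_subtractf[symmetric] algebra_simps)
    also have "\<dots> = 0"
    proof -
      have p1: "\<forall>j\<in>set es. 0 < w j" "\<forall>j\<in>set es'. 0 < w j" using esm w_pos by auto
      show ?thesis using coef_tele[OF wk _ esm(1) p1(1), of r] coef_tele[OF wk' _ esm(2) p1(2), of r] h h' by simp
    qed
    finally show "(P *\<^sub>v x) $ r = 0\<^sub>v n $ r" using r by simp
  qed (use P_carrier in simp)
  have x0: "x = 0\<^sub>v m" by (rule forest_inj[OF S acyc xc supp Px])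
  have eqc: "?c j = ?c' j" if "j < m" for j
  proof -
    have "x $ j = 0" using x0 that by simp
    then show ?thesis unfolding x_def using that by simp
  qed
  have de: "distinct es" "distinct es'" using path_distinct_es[OF wk d] path_distinct_es[OF wk' d'] by auto
  have se: "set es = {j. j < m \<and> ?c j \<noteq> 0}"
  proof
    show "set es \<subseteq> {j. j < m \<and> ?c j \<noteq> 0}"
      using coef_nz[OF wk de(1)] esm w_pos by auto
    show "{j. j < m \<and> ?c j \<noteq> 0} \<subseteq> set es" using coef_supp by blast
  qed
  have se': "set es' = {j. j < m \<and> ?c' j \<noteq> 0}"
  proof
    show "set es' \<subseteq> {j. j < m \<and> ?c' j \<noteq> 0}"
      using coef_nz[OF wk' de(2)] esm w_pos by auto
    show "{j. j < m \<and> ?c' j \<noteq> 0} \<subseteq> set es'" using coef_supp by blast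
  qed
  show ?thesis unfolding se se' using eqc by auto
qed

lemma tree_path_eq:
  assumes T: "is_spanning_tree n m ends S" and p: "is_path ends S a b vs es"
  shows "tree_path ends S a b = set es"
  unfolding tree_path_def
proof (rule the_equality)
  show "\<exists>vs' es'. is_path ends S a b vs' es' \<and> set es = set es'" using p by blast
  fix Q assume "\<exists>vs' es'. is_path ends S a b vs' es' \<and> Q = set es'"
  then obtain vs' es' where "is_path ends S a b vs' es'" "Q = set es'" by blast
  then show "Q = set es" using path_unique_edges[OF T p] by simp
qed

end



context setting begin

lemma P_unit: assumes i: "i < m" shows "P *\<^sub>v unit_vec m i = vec n (\<lambda>r. inc ends w r i)"
proof (rule eq_vecI)
  fix r assume "r < dim_vec (vec n (\<lambda>r. inc ends w r i))"
  then have r: "r < n" by simp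
  have "(P *\<^sub>v unit_vec m i) $ r = (\<Sum>j<m. inc ends w r j * unit_vec m i $ j)" by (rule P_vec_idx) (use r in simp_all)
  also have "\<dots> = (\<Sum>j<m. if j = i then inc ends w r i else 0)" using i by (intro sum.cong refl) auto
  also have "\<dots> = inc ends w r i" using i by (simp add: sum.delta)
  finally show "(P *\<^sub>v unit_vec m i) $ r = vec n (\<lambda>r. inc ends w r i) $ r" using r by simp
qed (use P_carrier in simp)

lemma Y_unit: assumes i: "i < m" shows "Y *\<^sub>v unit_vec m i = col Y i"
proof (rule eq_vecI)
  fix a assume "a < dim_vec (col Y i)"
  then have a: "a < n - 1" using Y_c by simp
  have "(Y *\<^sub>v unit_vec m i) $ a = (\<Sum>j<m. Y $$ (a, j) * unit_vec m i $ j)"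
    by (rule mult_vec_index[OF Y_c]) (use a in simp_all)
  also have "\<dots> = (\<Sum>j<m. if j = i then Y $$ (a, i) else 0)" using i by (intro sum.cong refl) auto
  also have "\<dots> = Y $$ (a, i)" using i by (simp add: sum.delta)
  finally show "(Y *\<^sub>v unit_vec m i) $ a = col Y i $ a" using a i Y_c by simp
qed (use Y_c in simp)

lemma col_BY:
  assumes T: "is_spanning_tree n m ends S" and B: "B \<in> carrier_mat (n-1) (n-1)"
    and BA: "B * col_submat Y S = 1\<^sub>m (n-1)" and i: "i < m"
    and p: "is_path ends S (fst (ends i)) (snd (ends i)) vs es" and r: "r < n - 1"
  shows "(B * Y) $$ (r, i) = sqrt (w i) * coef ends w vs es (pick S r)"
proof -
  have S: "S \<subseteq> {..<m}" using T unfolding is_spanning_tree_def by auto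
  have k: "card S = n - 1" using tree_card[OF T] .
  let ?A = "col_submat Y S"
  have A: "?A \<in> carrier_mat (n-1) (n-1)" using col_submat_carrier[OF Y_c S] k by simp
  have wk: "walk ends S vs es" and h: "hd vs = fst (ends i)" "last vs = snd (ends i)" using p unfolding is_path_def by auto
  let ?c = "vec m (coef ends w vs es)"
  let ?c' = "vec (n-1) (\<lambda>r. coef ends w vs es (pick S r))"
  let ?x = "sqrt (w i) \<cdot>\<^sub>v ?c'"
  have cc: "?c \<in> carrier_vec m" by simp
  have c'c: "?c' \<in> carrier_vec (n-1)" by simp
  have "P *\<^sub>v unit_vec m i = sqrt (w i) \<cdot>\<^sub>v (P *\<^sub>v ?c)"
    unfolding P_unit[OF i] walk_coef[OF wk S] h by (intro eq_vecI) (auto simp: inc_def)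
  also have "\<dots> = P *\<^sub>v (sqrt (w i) \<cdot>\<^sub>v ?c)" by (rule mult_mat_vec[OF P_carrier cc, symmetric])
  finally have "Y *\<^sub>v unit_vec m i = Y *\<^sub>v (sqrt (w i) \<cdot>\<^sub>v ?c)" by (intro PY_eq) simp_all
  also have "\<dots> = sqrt (w i) \<cdot>\<^sub>v (Y *\<^sub>v ?c)" by (rule mult_mat_vec[OF Y_c cc])
  also have "Y *\<^sub>v ?c = ?A *\<^sub>v ?c'" using Y_restrict[OF S, of "coef ends w vs es"] coef_vec_supp[OF wk] k by simp
  also have "sqrt (w i) \<cdot>\<^sub>v (?A *\<^sub>v ?c') = ?A *\<^sub>v ?x" by (rule mult_mat_vec[OF A c'c, symmetric])
  finally have colY: "col Y i = ?A *\<^sub>v ?x" using Y_unit[OF i] by simp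
  have xc: "?x \<in> carrier_vec (n-1)" by simp
  have "col (B * Y) i = B *\<^sub>v col Y i" using B Y_c i by (subst col_mult2) auto
  also have "\<dots> = (B * ?A) *\<^sub>v ?x" unfolding colY using assoc_mult_mat_vec[OF B A xc] by simp
  also have "\<dots> = ?x" unfolding BA using xc by simp
  finally have "col (B * Y) i $ r = ?x $ r" by simp
  then show ?thesis using B Y_c i r by simp
qed

lemma edge_sum:
  assumes T: "is_spanning_tree n m ends S" and B: "B \<in> carrier_mat (n-1) (n-1)"
    and BA: "B * col_submat Y S = 1\<^sub>m (n-1)" and i: "i < m"
  shows "(\<Sum>r<n-1. ((B * Y) $$ (r, i))\<^sup>2) = stretch_edge ends w S i"
proof -
  have S: "S \<subseteq> {..<m}" and cS: "connected_on n ends S" using T unfolding is_spanning_tree_def by auto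
  have k: "card S = n - 1" using tree_card[OF T] .
  have fS: "finite S" using S finite_subset by blast
  obtain vs es where p: "is_path ends S (fst (ends i)) (snd (ends i)) vs es"
    using cS ends_in[OF i] unfolding connected_on_def by blast
  have wk: "walk ends S vs es" and d: "distinct vs" using p unfolding is_path_def by auto
  have de: "distinct es" using path_distinct_es[OF wk d] .
  have esS: "set es \<subseteq> S" using walk_set_es[OF wk] .
  let ?c = "coef ends w vs es"
  have wi: "w i > 0" using w_pos[OF i] .
  have "(\<Sum>r<n-1. ((B * Y) $$ (r, i))\<^sup>2) = (\<Sum>r<card S. w i * (?c (pick S r))\<^sup>2)"
    unfolding k using col_BY[OF T B BA i p] wi by (intro sum.cong refl) (simp add: power_mult_distrib)
  also have "\<dots> = (\<Sum>j\<in>S. w i * (?c j)\<^sup>2)" by (rule sum_pick[OF fS])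
  also have "\<dots> = (\<Sum>j\<in>set es. w i * (?c j)\<^sup>2)"
    using esS fS coef_supp by (intro sum.mono_neutral_right) auto
  also have "\<dots> = (\<Sum>j\<in>set es. w i / w j)"
  proof (rule sum.cong[OF refl])
    fix j assume j: "j \<in> set es"
    have "w j > 0" using j esS S w_pos by auto
    then show "w i * (?c j)\<^sup>2 = w i / w j" using coef_distinct[OF wk de j] by simp
  qed
  also have "\<dots> = stretch_edge ends w S i" unfolding stretch_edge_def tree_path_eq[OF T p] ..
  finally show ?thesis .
qed

lemma part1:
  assumes T: "is_spanning_tree n m ends S"
  shows "invertible_mat (col_submat Y S) \<and> stretch m ends w S = frob_sq (mat_inv (col_submat Y S))"
proof -
  have S: "S \<subseteq> {..<m}" using T unfolding is_spanning_tree_def by auto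
  have k: "card S = n - 1" using tree_card[OF T] .
  let ?A = "col_submat Y S"
  have A: "?A \<in> carrier_mat (n-1) (n-1)" using col_submat_carrier[OF Y_c S] k by simp
  have d: "det ?A \<noteq> 0" using tree_det[OF T] .
  have mi: "mat_inv ?A \<in> carrier_mat (n-1) (n-1)" "?A * mat_inv ?A = 1\<^sub>m (n-1)" "mat_inv ?A * ?A = 1\<^sub>m (n-1)"
    using mat_inv_props[OF A d] by auto
  have inv: "invertible_mat ?A"
    unfolding invertible_mat_def inverts_mat_def square_mat.simps using A mi by auto
  have "frob_sq (mat_inv ?A) = frob_sq (mat_inv ?A * Y)" using frob_mult[OF mi(1) Y_c YYt] by simp
  also have "\<dots> = (\<Sum>r<n-1. \<Sum>i<m. ((mat_inv ?A * Y) $$ (r, i))\<^sup>2)"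
    unfolding frob_sq_def using mi(1) Y_c by simp
  also have "\<dots> = (\<Sum>i<m. \<Sum>r<n-1. ((mat_inv ?A * Y) $$ (r, i))\<^sup>2)" by (rule sum.swap)
  also have "\<dots> = (\<Sum>i<m. stretch_edge ends w S i)"
    using edge_sum[OF T mi(1) mi(3)] by (intro sum.cong refl) simp
  finally show ?thesis using inv unfolding stretch_def by simp
qed

end



context setting begin

lemma part2:
  assumes S: "S \<subseteq> {..<m}" and k: "card S = n - 1"
    and rk: "vec_space.rank (n - 1) (col_submat Y S) = n - 1"
  shows "is_spanning_tree n m ends S"
proof -
  let ?A = "col_submat Y S"
  have A: "?A \<in> carrier_mat (n-1) (n-1)" using col_submat_carrier[OF Y_c S] k by simp
  have d: "det ?A \<noteq> 0" using vec_space.det_rank_iff[OF A] rk by simp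
  have fS: "finite S" using S finite_subset by blast
  have acyc: "acyclic_on ends S" unfolding acyclic_on_def
  proof
    assume "\<exists>vs es. is_cycle ends S vs es"
    then obtain vs es where cy: "is_cycle ends S vs es" by blast
    have wk: "walk ends S vs es" and ne: "es \<noteq> []" and hl: "hd vs = last vs" and de: "distinct es"
      using cy unfolding is_cycle_def by auto
    let ?c = "coef ends w vs es"
    have "P *\<^sub>v vec m ?c = 0\<^sub>v n" unfolding walk_coef[OF wk S] hl by (intro eq_vecI) auto
    then have "Y *\<^sub>v vec m ?c = 0\<^sub>v (n-1)" by (intro PY) simp_all
    then have Ac: "?A *\<^sub>v vec (card S) (\<lambda>r. ?c (pick S r)) = 0\<^sub>v (n-1)"
      using Y_restrict[OF S, of ?c] coef_vec_supp[OF wk] by simp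
    have c0: "vec (card S) (\<lambda>r. ?c (pick S r)) = 0\<^sub>v (n-1)"
      using det_nz_inj[OF A d, of "vec (card S) (\<lambda>r. ?c (pick S r))"] Ac k by simp
    define j where "j = hd es"
    have jes: "j \<in> set es" using ne unfolding j_def by simp
    have jS: "j \<in> S" using walk_set_es[OF wk] jes by auto
    have wj: "w j > 0" using jS S w_pos by auto
    have cj: "?c j \<noteq> 0" using coef_nz[where w=w, OF wk de jes wj] .
    have il: "card {a\<in>S. a < j} < card S" using idx_less[OF fS jS] .
    have e1: "vec (card S) (\<lambda>r. ?c (pick S r)) $ card {a\<in>S. a < j} = 0" unfolding c0 using il k by simp
    have e2: "vec (card S) (\<lambda>r. ?c (pick S r)) $ card {a\<in>S. a < j} = ?c j"
      using il pick_card_in_set[OF jS] by simp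
    show False using e1 e2 cj by simp
  qed
  have cS: "connected_on n ends S" unfolding connected_on_def
  proof (intro allI impI)
    fix u v assume u: "u < n" and v: "v < n"
    obtain vs es where p: "is_path ends {..<m} u v vs es" using conn u v unfolding connected_on_def by blast
    have wk: "walk ends {..<m} vs es" and h: "hd vs = u" "last vs = v" using p unfolding is_path_def by auto
    let ?c = "vec m (coef ends w vs es)"
    have Pc: "P *\<^sub>v ?c = vec n (\<lambda>r. (if r = u then 1 else 0) - (if r = v then 1 else 0))"
      using walk_coef[OF wk order_refl] h by simp
    define y where "y = Y *\<^sub>v ?c"
    have yc: "y \<in> carrier_vec (n-1)" unfolding y_def using Y_c by simp
    have mi: "mat_inv ?A \<in> carrier_mat (n-1) (n-1)" "?A * mat_inv ?A = 1\<^sub>m (n-1)"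
      using mat_inv_props[OF A d] by auto
    define z where "z = mat_inv ?A *\<^sub>v y"
    have zc: "z \<in> carrier_vec (card S)" unfolding z_def using mult_mat_vec_carrier[OF mi(1) yc] k by simp
    have Az: "?A *\<^sub>v z = y" unfolding z_def using assoc_mult_mat_vec[OF A mi(1) yc, symmetric] mi(2) yc by simp
    have Yx: "Y *\<^sub>v ex S z = y" using Y_expand[OF S zc] Az by simp
    have "P *\<^sub>v ex S z = P *\<^sub>v ?c" using P_vec[OF ex_carrier, of S z] P_vec[of ?c] Yx unfolding y_def by simp
    then have Px: "P *\<^sub>v ex S z = vec n (\<lambda>r. (if r = u then 1 else 0) - (if r = v then 1 else 0))" using Pc by simp
    have supp: "\<And>j. j < m \<Longrightarrow> j \<notin> S \<Longrightarrow> ex S z $ j = 0" unfolding ex_def by simp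
    show "\<exists>vs es. is_path ends S u v vs es" by (rule comp_conn[OF S u v ex_carrier supp Px])
  qed
  show ?thesis unfolding is_spanning_tree_def using S cS acyc by simp
qed

end


theorem theorem5p1:
  fixes n m :: nat and ends :: "nat \<Rightarrow> nat \<times> nat" and w :: "nat \<Rightarrow> real"
    and U Sig V :: "real mat"
  assumes n_pos: "n \<ge> 1"
    and ends_in: "\<And>i. i < m \<Longrightarrow> fst (ends i) < n \<and> snd (ends i) < n"
    and no_loops: "\<And>i. i < m \<Longrightarrow> fst (ends i) \<noteq> snd (ends i)"
    and simple: "\<And>i j. i < m \<Longrightarrow> j < m \<Longrightarrow> i \<noteq> j \<Longrightarrow>
                   ends i \<noteq> ends j \<and> ends i \<noteq> prod.swap (ends j)"
    and w_pos: "\<And>i. i < m \<Longrightarrow> w i > 0"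
    and conn: "connected_on n ends {..<m}"
    and svd: "thin_svd (incidence_mat n m ends w) (n - 1) U Sig V"
  shows "(\<forall>S. is_spanning_tree n m ends S \<longrightarrow>
            invertible_mat (col_submat (transpose_mat V) S) \<and>
            stretch m ends w S = frob_sq (mat_inv (col_submat (transpose_mat V) S)))
       \<and> (\<forall>S. S \<subseteq> {..<m} \<and> card S = n - 1 \<and>
            vec_space.rank (n - 1) (col_submat (transpose_mat V) S) = n - 1
            \<longrightarrow> is_spanning_tree n m ends S)"
  proof -
  interpret setting n m ends w U Sig V
    using n_pos ends_in no_loops w_pos conn svd by unfold_locales auto
  show ?thesis using part1 part2 by blast
qed

end
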